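(* Let $K$ be an arbitrary valued field, $d\ge1$, and let $C\subseteq K^d$ be the convex hull of a finite set, with $0\in C$. Then there exist a complete flag of $K$-linear subspaces $\{0\}\subsetneq F_1\subsetneq\dots\subsetneq F_d=K^d$ and elements $\gamma_1\le\gamma_2\le\dots\le\gamma_d$ of $\Gamma\cup\{\infty\}$ such that $$C=\{v_1+\dots+v_d:\ v_i\in F_i,\ \nu_{K^d}(v_i)\ge\gamma_i\text{ for all } i\}.$$
   Context: $K$ is a field with valuation $\nu:K\to\Gamma\cup\{\infty\}$, valuation ring $\mathcal{O}$. On $K^d$, $\nu_{K^d}(x_1,\dots,x_d)=\min_i\nu(x_i)$. For $Y\subseteq K^d$, $\operatorname{conv}(Y)=\{\sum_{i=1}^n\alpha_iy_i: n\ge1, y_i\in Y,\alpha_i\in\mathcal{O},\sum_i\alpha_i=1\}$. *)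

theory Defs
  imports "HOL-Analysis.Cartesian_Space"
begin

datatype 'g ext = Fin 'g | Infty

instantiation ext :: (linorder) linorder
begin
fun less_eq_ext :: "'a ext \<Rightarrow> 'a ext \<Rightarrow> bool" where
  "less_eq_ext (Fin a) (Fin b) = (a \<le> b)"
| "less_eq_ext _ Infty = True"
| "less_eq_ext Infty (Fin _) = False"
definition less_ext :: "'a ext \<Rightarrow> 'a ext \<Rightarrow> bool" where
  "less_ext x y = (x \<le> y \<and> \<not> y \<le> x)"
instance
proof
  fix x y z :: "'a ext"
  show "(x < y) = (x \<le> y \<and> \<not> y \<le> x)" by (simp add: less_ext_def)
  show "x \<le> x" by (cases x) auto
  show "x \<le> y \<Longrightarrow> y \<le> z \<Longrightarrow> x \<le> z"
    by (cases x; cases y; cases z) auto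
  show "x \<le> y \<Longrightarrow> y \<le> x \<Longrightarrow> x = y"
    by (cases x; cases y) auto
  show "x \<le> y \<or> y \<le> x" by (cases x; cases y) auto
qed
end

instantiation ext :: (plus) plus
begin
fun plus_ext :: "'a ext \<Rightarrow> 'a ext \<Rightarrow> 'a ext" where
  "plus_ext (Fin a) (Fin b) = Fin (a + b)"
| "plus_ext _ _ = Infty"
instance ..
end

definition valuation :: "('k::field \<Rightarrow> 'g::linordered_ab_group_add ext) \<Rightarrow> bool" where
  "valuation \<nu> \<longleftrightarrow>
     (\<forall>x. \<nu> x = Infty \<longleftrightarrow> x = 0) \<and>
     (\<forall>x y. \<nu> (x * y) = \<nu> x + \<nu> y) \<and>
     (\<forall>x y. min (\<nu> x) (\<nu> y) \<le> \<nu> (x + y))"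

definition val_ring :: "('k::field \<Rightarrow> 'g::linordered_ab_group_add ext) \<Rightarrow> 'k set" where
  "val_ring \<nu> = {a. Fin 0 \<le> \<nu> a}"

definition vec_val :: "('k::field \<Rightarrow> 'g::linordered_ab_group_add ext) \<Rightarrow> 'k ^ 'n::finite \<Rightarrow> 'g ext" where
  "vec_val \<nu> x = Min (range (\<lambda>i. \<nu> (x $ i)))"

definition vconv :: "('k::field \<Rightarrow> 'g::linordered_ab_group_add ext) \<Rightarrow> ('k ^ 'n::finite) set \<Rightarrow> ('k ^ 'n) set" where
  "vconv \<nu> Y = {(\<Sum>i<n. \<alpha> i *s y i) | (n::nat) (\<alpha>::nat \<Rightarrow> 'k) (y::nat \<Rightarrow> 'k ^ 'n). n \<ge> 1 \<and> (\<forall>i<n. y i \<in> Y \<and> \<alpha> i \<in> val_ring \<nu>)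
                     \<and> (\<Sum>i<n. \<alpha> i) = 1}"

end

theory Submission
  imports Defs
begin

lemma ext_add_comm: "(x::'g::linordered_ab_group_add ext) + y = y + x"
  by (cases x; cases y) (auto simp: add.commute)

lemma ext_add_Fin0: "(x::'g::linordered_ab_group_add ext) + Fin 0 = x"
  by (cases x) auto

lemma ext_le_add: "Fin 0 \<le> (c::'g::linordered_ab_group_add ext) \<Longrightarrow> a \<le> a + c"
  by (cases a; cases c) auto

lemma ext_le_add2: "Fin 0 \<le> (c::'g::linordered_ab_group_add ext) \<Longrightarrow> a \<le> c + a"
  using ext_le_add ext_add_comm by metis

lemma ext_add_mono: "(a::'g::linordered_ab_group_add ext) \<le> b \<Longrightarrow> a + c \<le> b + c"
  by (cases a; cases b; cases c) auto

lemma ext_nonneg_add: "Fin 0 \<le> (x::'g::linordered_ab_group_add ext) \<Longrightarrow> Fin 0 \<le> y \<Longrightarrow> Fin 0 \<le> x + y"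
  by (cases x; cases y) auto

lemma ext_le_Infty[simp]: "(x::'g::linorder ext) \<le> Infty"
  by (cases x) auto

lemma ext_Infty_le[simp]: "(Infty \<le> (x::'g::linorder ext)) = (x = Infty)"
  by (cases x) auto

context
  fixes \<nu> :: "'k::field \<Rightarrow> 'g::linordered_ab_group_add ext"
  assumes val: "valuation \<nu>"
begin

lemma v_Infty: "\<nu> x = Infty \<longleftrightarrow> x = 0"
  using val unfolding valuation_def by blast

lemma v0[simp]: "\<nu> 0 = Infty" using v_Infty by blast

lemma v_mult: "\<nu> (x * y) = \<nu> x + \<nu> y"
  using val unfolding valuation_def by blast

lemma v_add: "min (\<nu> x) (\<nu> y) \<le> \<nu> (x + y)"
  using val unfolding valuation_def by blast

lemma v1[simp]: "\<nu> 1 = Fin 0"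
proof -
  obtain g where g: "\<nu> 1 = Fin g" using v_Infty by (cases "\<nu> 1") auto
  have "\<nu> 1 = \<nu> 1 + \<nu> 1" using v_mult[of 1 1] by simp
  with g have "g = g + g" by simp
  then have "g = 0" by (metis add_cancel_left_right)
  with g show ?thesis by simp
qed

lemma v_neg1: "\<nu> (-1) = Fin 0"
proof -
  obtain g where g: "\<nu> (-1) = Fin g" using v_Infty by (cases "\<nu> (-1)") auto
  have "\<nu> 1 = \<nu> (-1) + \<nu> (-1)" using v_mult[of "-1" "-1"] by simp
  with g have "g + g = 0" by simp
  then have "g = 0"
    by (metis add_less_zeroD add_pos_pos less_irrefl linorder_neqE_linordered_idom
        add_neg_neg neq_iff)
  with g show ?thesis by simp
qed

lemma v_neg[simp]: "\<nu> (- x) = \<nu> x"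
proof -
  have "\<nu> (-x) = \<nu> (-1) + \<nu> x" using v_mult[of "-1" x] by simp
  then show ?thesis using v_neg1 ext_add_comm ext_add_Fin0 by metis
qed

lemma v_diff: "min (\<nu> x) (\<nu> y) \<le> \<nu> (x - y)"
  using v_add[of x "-y"] by simp

lemma v_div_nonneg: assumes "\<nu> b \<le> \<nu> a" "b \<noteq> 0" shows "Fin 0 \<le> \<nu> (a / b)"
proof (cases "a = 0")
  case True then show ?thesis by simp
next
  case False
  obtain g where g: "\<nu> b = Fin g" using v_Infty assms(2) by (cases "\<nu> b") auto
  obtain h where h: "\<nu> (a/b) = Fin h" using v_Infty False assms(2) by (cases "\<nu> (a/b)") auto
  have "a = (a/b) * b" using assms(2) by simp
  then have "\<nu> a = Fin h + Fin g" using v_mult g h by metis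
  with assms(1) g have "g \<le> h + g" by simp
  with h show ?thesis by simp
qed

lemma v_sum: "finite A \<Longrightarrow> (\<And>i. i \<in> A \<Longrightarrow> g \<le> \<nu> (h i)) \<Longrightarrow> g \<le> \<nu> (\<Sum>i\<in>A. h i)"
proof (induction A rule: finite_induct)
  case empty then show ?case by simp
next
  case (insert x F)
  then have "g \<le> \<nu> (h x)" "g \<le> \<nu> (\<Sum>i\<in>F. h i)" by auto
  then have "g \<le> min (\<nu> (h x)) (\<nu> (\<Sum>i\<in>F. h i))" by simp
  also have "\<dots> \<le> \<nu> (h x + (\<Sum>i\<in>F. h i))" by (rule v_add)
  finally show ?case using insert by simp
qed

lemma vv_le: "vec_val \<nu> x \<le> \<nu> (x $ i)"
  unfolding vec_val_def by (rule Min_le) auto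

lemma vv_ge: "(\<And>i. c \<le> \<nu> (x $ i)) \<Longrightarrow> c \<le> vec_val \<nu> x"
  unfolding vec_val_def by (subst Min_ge_iff) auto

lemma vv_ex: "\<exists>i. vec_val \<nu> x = \<nu> (x $ i)"
proof -
  have "vec_val \<nu> x \<in> range (\<lambda>i. \<nu> (x $ i))"
    unfolding vec_val_def by (rule Min_in) auto
  then show ?thesis by auto
qed

lemma vv_Infty: "vec_val \<nu> x = Infty \<longleftrightarrow> x = 0"
proof
  assume "vec_val \<nu> x = Infty"
  then have "\<forall>i. \<nu> (x $ i) = Infty" using vv_le by (metis ext_Infty_le)
  then show "x = 0" using v_Infty by (simp add: vec_eq_iff)
next
  assume "x = 0" then show "vec_val \<nu> x = Infty"
    using vv_ex[of x] by auto
qed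

lemma vv_scale: "Fin 0 \<le> vec_val \<nu> x \<Longrightarrow> \<nu> a \<le> vec_val \<nu> (a *s x)"
proof (rule vv_ge)
  fix i assume "Fin 0 \<le> vec_val \<nu> x"
  then have "Fin 0 \<le> \<nu> (x $ i)" using vv_le order_trans by blast
  then show "\<nu> a \<le> \<nu> ((a *s x) $ i)" using v_mult ext_le_add by simp
qed

end

lemma sum_concat:
  "(\<Sum>i<n+(m::nat). (if i < n then g i else h (i - n))) = (\<Sum>i<n. g i) + (\<Sum>i<m. (h i :: 'a::comm_monoid_add))"
proof (induction m arbitrary: g h)
  case 0
  have "(\<Sum>i<n. (if i < n then g i else h (i - n))) = (\<Sum>i<n. g i)" by (rule sum.cong) auto
  then show ?case by simp
next
  case (Suc m) then show ?case by (simp add: add_Suc_right add.assoc)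
qed

definition msp :: "('k::field \<Rightarrow> 'g::linordered_ab_group_add ext) \<Rightarrow> ('k ^ 'n::finite) set \<Rightarrow> ('k ^ 'n) set" where
  "msp \<nu> S = {(\<Sum>i<n. c i *s y i) | (n::nat) c y. \<forall>i<n. y i \<in> S \<and> Fin 0 \<le> \<nu> (c i)}"

lemma mspE: assumes "x \<in> msp \<nu> S"
  obtains n c y where "x = (\<Sum>i<(n::nat). c i *s y i)" "\<forall>i<n. y i \<in> S \<and> Fin 0 \<le> \<nu> (c i)"
proof -
  have "\<exists>n c y. x = (\<Sum>i<(n::nat). c i *s y i) \<and> (\<forall>i<n. y i \<in> S \<and> Fin 0 \<le> \<nu> (c i))"
    using assms unfolding msp_def by blast
  then show ?thesis by (elim exE conjE) (rule that, assumption+)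
qed

lemma mspI: "x = (\<Sum>i<(n::nat). c i *s y i) \<Longrightarrow> \<forall>i<n. y i \<in> S \<and> Fin 0 \<le> \<nu> (c i) \<Longrightarrow> x \<in> msp \<nu> S"
  unfolding msp_def by (intro CollectI exI[of _ n] exI[of _ c] exI[of _ y]) simp

lemma vconvE: assumes "x \<in> vconv \<nu> S"
  obtains n \<alpha> y where "x = (\<Sum>i<(n::nat). \<alpha> i *s y i)" "n \<ge> 1" "\<forall>i<n. y i \<in> S \<and> Fin 0 \<le> \<nu> (\<alpha> i)"
    "(\<Sum>i<n. \<alpha> i) = 1"
proof -
  have "\<exists>n \<alpha> y. x = (\<Sum>i<(n::nat). \<alpha> i *s y i) \<and> n \<ge> 1 \<and> (\<forall>i<n. y i \<in> S \<and> Fin 0 \<le> \<nu> (\<alpha> i))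
    \<and> (\<Sum>i<n. \<alpha> i) = 1"
    using assms unfolding vconv_def val_ring_def by blast
  then show ?thesis by (elim exE conjE) (rule that, assumption+)
qed

context
  fixes \<nu> :: "'k::field \<Rightarrow> 'g::linordered_ab_group_add ext"
  assumes val: "valuation \<nu>"
begin

lemma msp_zero: "0 \<in> msp \<nu> S"
  unfolding msp_def by (rule CollectI, rule exI[of _ 0]) auto

lemma msp_single: "s \<in> S \<Longrightarrow> Fin 0 \<le> \<nu> c \<Longrightarrow> c *s s \<in> msp \<nu> S"
  unfolding msp_def
  by (rule CollectI, rule exI[of _ 1], rule exI[of _ "\<lambda>_. c"], rule exI[of _ "\<lambda>_. s"]) auto

lemma msp_add: assumes "x \<in> msp \<nu> S" "y \<in> msp \<nu> S" shows "x + y \<in> msp \<nu> S"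
proof -
  obtain n :: nat and c u where x: "x = (\<Sum>i<n. c i *s u i)" "\<forall>i<n. u i \<in> S \<and> Fin 0 \<le> \<nu> (c i)"
    using assms(1) by (rule mspE)
  obtain m :: nat and d w where y: "y = (\<Sum>i<m. d i *s w i)" "\<forall>i<m. w i \<in> S \<and> Fin 0 \<le> \<nu> (d i)"
    using assms(2) by (rule mspE)
  let ?c = "\<lambda>i::nat. if i < n then c i else d (i - n)"
  let ?u = "\<lambda>i::nat. if i < n then u i else w (i - n)"
  have "(\<Sum>i<n+m. ?c i *s ?u i) = (\<Sum>i<n+m. (if i < n then c i *s u i else d (i-n) *s w (i-n)))"
    by (rule sum.cong) auto
  also have "\<dots> = x + y" using sum_concat x y by simp
  finally have eq: "x + y = (\<Sum>i<n+m. ?c i *s ?u i)" by simp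
  have "\<forall>i<n+m. ?u i \<in> S \<and> Fin 0 \<le> \<nu> (?c i)" using x y by auto
  with eq show ?thesis by (rule mspI)
qed

lemma msp_scale: assumes "x \<in> msp \<nu> S" "Fin 0 \<le> \<nu> a" shows "a *s x \<in> msp \<nu> S"
proof -
  obtain n :: nat and c u where x: "x = (\<Sum>i<n. c i *s u i)" "\<forall>i<n. u i \<in> S \<and> Fin 0 \<le> \<nu> (c i)"
    using assms(1) by (rule mspE)
  have "a *s x = (\<Sum>i<n. (a * c i) *s u i)" using x by (simp add: vec.scale_sum_right)
  moreover have "\<forall>i<n. u i \<in> S \<and> Fin 0 \<le> \<nu> (a * c i)"
    using x assms(2) v_mult[OF val] ext_nonneg_add by metis
  ultimately show ?thesis by (rule mspI)
qed

lemma msp_sum: "finite A \<Longrightarrow> (\<And>i. i \<in> A \<Longrightarrow> g i \<in> msp \<nu> S) \<Longrightarrow> (\<Sum>i\<in>A. g i) \<in> msp \<nu> S"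
  by (induction A rule: finite_induct) (auto intro: msp_zero msp_add)

lemma msp_sub: assumes "A \<subseteq> msp \<nu> B" shows "msp \<nu> A \<subseteq> msp \<nu> B"
proof
  fix x assume "x \<in> msp \<nu> A"
  then obtain n :: nat and c u where x: "x = (\<Sum>i<n. c i *s u i)" "\<forall>i<n. u i \<in> A \<and> Fin 0 \<le> \<nu> (c i)"
    by (rule mspE)
  show "x \<in> msp \<nu> B" unfolding x(1)
    by (rule msp_sum) (use x assms in \<open>auto intro: msp_scale\<close>)
qed

lemma msp_self: "S \<subseteq> msp \<nu> S"
  using msp_single[of _ S 1] by (auto simp: v1[OF val])

lemma vconv_msp: assumes "0 \<in> vconv \<nu> S" shows "vconv \<nu> S = msp \<nu> S"
proof
  show "vconv \<nu> S \<subseteq> msp \<nu> S" unfolding vconv_def msp_def val_ring_def by blast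
next
  obtain m :: nat and \<alpha> z where z: "0 = (\<Sum>i<m. \<alpha> i *s z i)" "m \<ge> 1" "\<forall>i<m. z i \<in> S \<and> Fin 0 \<le> \<nu> (\<alpha> i)"
    "(\<Sum>i<m. \<alpha> i) = 1"
    using assms by (rule vconvE)
  show "msp \<nu> S \<subseteq> vconv \<nu> S"
  proof
    fix x assume "x \<in> msp \<nu> S"
    then obtain n :: nat and c u where x: "x = (\<Sum>i<n. c i *s u i)" "\<forall>i<n. u i \<in> S \<and> Fin 0 \<le> \<nu> (c i)"
      by (rule mspE)
    define t where "t = 1 - (\<Sum>i<n. c i)"
    have tv: "Fin 0 \<le> \<nu> t"
    proof -
      have "Fin 0 \<le> \<nu> (\<Sum>i<n. c i)" by (rule v_sum[OF val]) (use x in auto)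
      then have "Fin 0 \<le> min (\<nu> 1) (\<nu> (\<Sum>i<n. c i))" by (simp add: v1[OF val])
      then show ?thesis unfolding t_def using v_diff[OF val] order_trans by blast
    qed
    let ?c = "\<lambda>i::nat. if i < n then c i else t * \<alpha> (i - n)"
    let ?u = "\<lambda>i::nat. if i < n then u i else z (i - n)"
    have "(\<Sum>i<n+m. ?c i *s ?u i) = (\<Sum>i<n+m. (if i < n then c i *s u i else t *s (\<alpha> (i-n) *s z (i-n))))"
      by (rule sum.cong) auto
    also have "\<dots> = x + t *s (\<Sum>i<m. \<alpha> i *s z i)"
      using sum_concat[where n=n and m=m and g="\<lambda>i. c i *s u i" and h="\<lambda>i. t *s (\<alpha> i *s z i)"] x
      by (simp add: vec.scale_sum_right)
    also have "\<dots> = x" using z(1) by simp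
    finally have e1: "x = (\<Sum>i<n+m. ?c i *s ?u i)" by simp
    have "(\<Sum>i<n+m. ?c i) = (\<Sum>i<n. c i) + (\<Sum>i<m. t * \<alpha> i)"
      using sum_concat[where n=n and m=m and g=c and h="\<lambda>i. t * \<alpha> i"] by simp
    also have "\<dots> = 1" using z(4) by (simp add: sum_distrib_left[symmetric] t_def)
    finally have e2: "(\<Sum>i<n+m. ?c i) = 1" .
    have "\<forall>i<n+m. ?u i \<in> S \<and> ?c i \<in> val_ring \<nu>"
    proof (intro allI impI)
      fix i assume i: "i < n + m"
      show "?u i \<in> S \<and> ?c i \<in> val_ring \<nu>"
      proof (cases "i < n")
        case True then show ?thesis using x unfolding val_ring_def by auto
      next
        case False
        then have "i - n < m" using i by auto
        then have "Fin 0 \<le> \<nu> (\<alpha> (i - n))" "z (i - n) \<in> S" using z by auto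
        then show ?thesis using False tv v_mult[OF val] ext_nonneg_add unfolding val_ring_def by auto
      qed
    qed
    with e1 e2 z(2) show "x \<in> vconv \<nu> S" unfolding vconv_def
      by (intro CollectI exI[of _ "n+m"] exI[of _ ?c] exI[of _ ?u]) auto
  qed
qed

end

lemma memCE: "x \<in> {g a | a. P a} \<Longrightarrow> (\<And>a. x = g a \<Longrightarrow> P a \<Longrightarrow> thesis) \<Longrightarrow> thesis"
  by blast

lemma memCI: "x = g a \<Longrightarrow> P a \<Longrightarrow> x \<in> {g a | a. P a}"
  by blast

definition VV :: "'n::finite set \<Rightarrow> ('k::field ^ 'n) set" where
  "VV J = {x. \<forall>j. j \<notin> J \<longrightarrow> x $ j = 0}"

lemma VV_sum: "(\<And>i. i \<in> A \<Longrightarrow> g i \<in> VV J) \<Longrightarrow> (\<Sum>i\<in>A. c i *s g i) \<in> VV J"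
  unfolding VV_def by (auto simp: sum_component)

lemma vv_w:
  assumes val: "valuation \<nu>" and f0k: "f0 $ k = 1" and f0n: "\<forall>j. Fin 0 \<le> \<nu> (f0 $ j)"
    and wk: "w $ k = 0"
  shows "vec_val \<nu> (a *s f0 + w) \<le> vec_val \<nu> w"
proof -
  let ?x = "a *s f0 + w"
  obtain j where j: "vec_val \<nu> w = \<nu> (w $ j)" using vv_ex[OF val] by blast
  have xk: "?x $ k = a" using f0k wk by simp
  have "w $ j = ?x $ j - a * f0 $ j" by simp
  then have mn: "min (\<nu> (?x $ j)) (\<nu> (a * f0 $ j)) \<le> \<nu> (w $ j)" using v_diff[OF val] by metis
  moreover have "vec_val \<nu> ?x \<le> \<nu> (?x $ j)" by (rule vv_le[OF val])
  moreover have "vec_val \<nu> ?x \<le> \<nu> (a * f0 $ j)"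
  proof -
    have "vec_val \<nu> ?x \<le> \<nu> a" using vv_le[OF val, of ?x k] xk by simp
    also have "\<nu> a \<le> \<nu> a + \<nu> (f0 $ j)" using f0n ext_le_add by blast
    finally show ?thesis using v_mult[OF val] by simp
  qed
  ultimately have "vec_val \<nu> ?x \<le> min (\<nu> (?x $ j)) (\<nu> (a * f0 $ j))" by simp
  from order_trans[OF this mn] j show ?thesis by simp
qed

context
  fixes \<nu> :: "'k::field \<Rightarrow> 'g::linordered_ab_group_add ext"
  assumes val: "valuation \<nu>"
begin

lemma pivot:
  fixes S :: "('k ^ 'n::finite) set"
  assumes "finite S" "S \<subseteq> VV J" "J \<noteq> {}"
  shows "\<exists>k f0 \<gamma>0. k \<in> J \<and> f0 \<in> VV J \<and> f0 $ k = 1 \<and> (\<forall>j. Fin 0 \<le> \<nu> (f0 $ j)) \<and>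
     (\<forall>s\<in>S. \<gamma>0 \<le> vec_val \<nu> s) \<and> (\<forall>a. \<gamma>0 \<le> \<nu> a \<longrightarrow> a *s f0 \<in> msp \<nu> S) \<and>
     (\<forall>c. (\<forall>s\<in>S. c \<le> vec_val \<nu> s) \<longrightarrow> c \<le> \<gamma>0)"
proof (cases "\<exists>s\<in>S. s \<noteq> 0")
  case True
  then obtain s1 where s1: "s1 \<in> S" "s1 \<noteq> 0" by blast
  define g0 where "g0 = Min (vec_val \<nu> ` S)"
  have "g0 \<in> vec_val \<nu> ` S" unfolding g0_def using assms(1) s1 by (intro Min_in) auto
  then obtain s0 where s0: "s0 \<in> S" "vec_val \<nu> s0 = g0" by blast
  have gle: "\<forall>s\<in>S. g0 \<le> vec_val \<nu> s" unfolding g0_def using assms(1) by auto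
  have "g0 \<noteq> Infty" using gle s1 vv_Infty[OF val, of s1] by (metis ext_Infty_le)
  then have "s0 \<noteq> 0" using s0 vv_Infty[OF val] by metis
  obtain k where k: "vec_val \<nu> s0 = \<nu> (s0 $ k)" using vv_ex[OF val] by blast
  have s0k: "s0 $ k \<noteq> 0" using k \<open>g0 \<noteq> Infty\<close> s0 v_Infty[OF val] by metis
  have kJ: "k \<in> J" using s0k s0 assms(2) unfolding VV_def by blast
  define f0 where "f0 = (1 / s0 $ k) *s s0"
  have f0V: "f0 \<in> VV J" using s0 assms(2) unfolding VV_def f0_def by auto
  have f0k: "f0 $ k = 1" using s0k unfolding f0_def by simp
  have f0n: "\<forall>j. Fin 0 \<le> \<nu> (f0 $ j)"
  proof
    fix j
    have "f0 $ j = s0 $ j / s0 $ k" unfolding f0_def by simp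
    moreover have "\<nu> (s0 $ k) \<le> \<nu> (s0 $ j)" using k vv_le[OF val] by metis
    ultimately show "Fin 0 \<le> \<nu> (f0 $ j)" using v_div_nonneg[OF val] s0k by simp
  qed
  have fa: "\<forall>a. g0 \<le> \<nu> a \<longrightarrow> a *s f0 \<in> msp \<nu> S"
  proof (intro allI impI)
    fix a assume "g0 \<le> \<nu> a"
    then have "Fin 0 \<le> \<nu> (a / s0 $ k)" using v_div_nonneg[OF val] s0k k s0 by metis
    moreover have "a *s f0 = (a / s0 $ k) *s s0" unfolding f0_def by (simp add: divide_inverse)
    ultimately show "a *s f0 \<in> msp \<nu> S" using msp_single[OF val] s0 by metis
  qed
  have c: "\<forall>c. (\<forall>s\<in>S. c \<le> vec_val \<nu> s) \<longrightarrow> c \<le> g0" using s0 by metis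
  show ?thesis
    apply (rule exI[of _ k], rule exI[of _ f0], rule exI[of _ g0])
    using kJ f0V f0k f0n gle fa c by simp
next
  case False
  obtain k where kJ: "k \<in> J" using assms(3) by blast
  define f0 :: "'k ^ 'n" where "f0 = (\<chi> j. if j = k then 1 else 0)"
  have f0V: "f0 \<in> VV J" using kJ unfolding VV_def f0_def by auto
  have f0k: "f0 $ k = 1" unfolding f0_def by simp
  have f0n: "\<forall>j. Fin 0 \<le> \<nu> (f0 $ j)" unfolding f0_def by (simp add: v1[OF val] v0[OF val])
  have gle: "\<forall>s\<in>S. (Infty :: 'g ext) \<le> vec_val \<nu> s" using False vv_Infty[OF val] by auto
  have fa: "\<forall>a. Infty \<le> \<nu> a \<longrightarrow> a *s f0 \<in> msp \<nu> S"
    using v_Infty[OF val] msp_zero[OF val] by auto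
  show ?thesis using kJ f0V f0k f0n gle fa by (intro exI[of _ k] exI[of _ f0] exI[of _ Infty]) auto
qed


lemma main_claim:
  fixes S :: "('k ^ 'n::finite) set" and J :: "'n set"
  assumes "card J = m" "finite S" "S \<subseteq> VV J"
  shows "\<exists>(f :: nat \<Rightarrow> 'k ^ 'n) (\<gamma> :: nat \<Rightarrow> 'g ext).
    (\<forall>i<m. f i \<in> VV J \<and> vec_val \<nu> (f i) = Fin 0) \<and>
    (\<forall>b. \<forall>i<m. vec_val \<nu> (\<Sum>j<m. b j *s f j) \<le> \<nu> (b i)) \<and>
    (\<forall>x\<in>VV J. \<exists>b. x = (\<Sum>j<m. b j *s f j)) \<and>
    (\<forall>i. Suc i < m \<longrightarrow> \<gamma> i \<le> \<gamma> (Suc i)) \<and>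
    (\<forall>i<m. \<forall>c. (\<forall>s\<in>S. c \<le> vec_val \<nu> s) \<longrightarrow> c \<le> \<gamma> i) \<and>
    msp \<nu> S = {(\<Sum>j<m. a j *s f j) | a. \<forall>i<m. \<gamma> i \<le> \<nu> (a i)}"
  using assms
proof (induction m arbitrary: J S)
  case 0
  then have J: "J = {}" by simp
  then have V: "VV J = {0}" unfolding VV_def by (auto simp: vec_eq_iff)
  have "msp \<nu> S \<subseteq> {0}"
  proof
    fix x assume "x \<in> msp \<nu> S"
    then obtain n :: nat and c u where x: "x = (\<Sum>i<n. c i *s u i)" "\<forall>i<n. u i \<in> S \<and> Fin 0 \<le> \<nu> (c i)"
      by (rule mspE)
    then have "\<forall>i<n. u i = 0" using 0 V by auto
    then show "x \<in> {0}" using x by simp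
  qed
  then have "msp \<nu> S = {0}" using msp_zero[OF val] by auto
  then show ?case using V
    by (intro exI[of _ "\<lambda>_. 0"] exI[of _ "\<lambda>_. Infty"]) auto
next
  case (Suc m)
  have Jne: "J \<noteq> {}" using Suc.prems(1) by auto
  obtain k f0 \<gamma>0 where kJ: "k \<in> J" and f0V: "f0 \<in> VV J" and f0k: "f0 $ k = 1"
    and f0n: "\<forall>j. Fin 0 \<le> \<nu> (f0 $ j)" and gle: "\<forall>s\<in>S. \<gamma>0 \<le> vec_val \<nu> s"
    and fa: "\<forall>a. \<gamma>0 \<le> \<nu> a \<longrightarrow> a *s f0 \<in> msp \<nu> S"
    and gc: "\<forall>c. (\<forall>s\<in>S. c \<le> vec_val \<nu> s) \<longrightarrow> c \<le> \<gamma>0"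
    using pivot[OF Suc.prems(2,3) Jne] by blast
  define p where "p = (\<lambda>s::'k^'n. s - (s $ k) *s f0)"
  define J' where "J' = J - {k}"
  define S' where "S' = p ` S"
  have cJ': "card J' = m" using Suc.prems(1) kJ unfolding J'_def by simp
  have pV: "p x \<in> VV J'" if "x \<in> VV J" for x
    using that f0V f0k unfolding VV_def J'_def p_def by auto
  have S'V: "S' \<subseteq> VV J'" using Suc.prems(3) pV unfolding S'_def by auto
  have fS': "finite S'" using Suc.prems(2) unfolding S'_def by simp
  obtain f' \<gamma>' where
    IH1: "\<forall>i<m. f' i \<in> VV J' \<and> vec_val \<nu> (f' i) = Fin 0" and
    IH2: "\<forall>b. \<forall>i<m. vec_val \<nu> (\<Sum>j<m. b j *s f' j) \<le> \<nu> (b i)" and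
    IH3: "\<forall>x\<in>VV J'. \<exists>b. x = (\<Sum>j<m. b j *s f' j)" and
    IH4: "\<forall>i. Suc i < m \<longrightarrow> \<gamma>' i \<le> \<gamma>' (Suc i)" and
    IH5: "\<forall>i<m. \<forall>c. (\<forall>s\<in>S'. c \<le> vec_val \<nu> s) \<longrightarrow> c \<le> \<gamma>' i" and
    IH6: "msp \<nu> S' = {(\<Sum>j<m. a j *s f' j) | a. \<forall>i<m. \<gamma>' i \<le> \<nu> (a i)}"
    using Suc.IH[OF cJ' fS' S'V] by blast
  define f where "f = (\<lambda>i. if i = 0 then f0 else f' (i - 1))"
  define \<gamma> where "\<gamma> = (\<lambda>i. if i = 0 then \<gamma>0 else \<gamma>' (i - 1))"
  have split: "(\<Sum>j<Suc m. b j *s f j) = b 0 *s f0 + (\<Sum>j<m. b (Suc j) *s f' j)" for b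
    unfolding f_def by (subst sum.lessThan_Suc_shift) simp
  have wV: "(\<Sum>j<m. b j *s f' j) \<in> VV J'" for b
    by (rule VV_sum) (use IH1 in auto)
  have wk: "(\<Sum>j<m. b j *s f' j) $ k = 0" for b
    using wV[of b] unfolding VV_def J'_def by auto
  have pval: "\<gamma>0 \<le> vec_val \<nu> (p s)" if "s \<in> S" for s
  proof (rule vv_ge[OF val])
    fix j
    have a: "\<gamma>0 \<le> \<nu> (s $ j)" using gle that vv_le[OF val] order_trans by blast
    have "\<gamma>0 \<le> \<nu> (s $ k)" using gle that vv_le[OF val] order_trans by blast
    also have "\<nu> (s $ k) \<le> \<nu> (s $ k) + \<nu> (f0 $ j)" using f0n ext_le_add by blast
    finally have b: "\<gamma>0 \<le> \<nu> (s $ k * f0 $ j)" using v_mult[OF val] by simp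
    have "\<gamma>0 \<le> min (\<nu> (s $ j)) (\<nu> (s $ k * f0 $ j))" using a b by simp
    also have "\<dots> \<le> \<nu> (s $ j - s $ k * f0 $ j)" by (rule v_diff[OF val])
    finally show "\<gamma>0 \<le> \<nu> (p s $ j)" unfolding p_def by simp
  qed
  have P1: "\<forall>i<Suc m. f i \<in> VV J \<and> vec_val \<nu> (f i) = Fin 0"
  proof (intro allI impI)
    fix i assume i: "i < Suc m"
    show "f i \<in> VV J \<and> vec_val \<nu> (f i) = Fin 0"
    proof (cases i)
      case 0
      have "Fin 0 \<le> vec_val \<nu> f0" using f0n vv_ge[OF val] by blast
      moreover have "vec_val \<nu> f0 \<le> Fin 0" using vv_le[OF val, of f0 k] f0k v1[OF val] by simp
      ultimately show ?thesis using 0 f0V unfolding f_def by simp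
    next
      case (Suc i')
      then show ?thesis using IH1 i unfolding f_def J'_def VV_def by auto
    qed
  qed
  have P2: "\<forall>b. \<forall>i<Suc m. vec_val \<nu> (\<Sum>j<Suc m. b j *s f j) \<le> \<nu> (b i)"
  proof (intro allI impI)
    fix b i assume i: "i < Suc m"
    let ?w = "\<Sum>j<m. b (Suc j) *s f' j"
    have xe: "(\<Sum>j<Suc m. b j *s f j) = b 0 *s f0 + ?w" by (rule split)
    show "vec_val \<nu> (\<Sum>j<Suc m. b j *s f j) \<le> \<nu> (b i)"
    proof (cases i)
      case 0
      have "(b 0 *s f0 + ?w) $ k = b 0" using f0k wk by simp
      then show ?thesis using xe 0 vv_le[OF val, of "b 0 *s f0 + ?w" k] by simp
    next
      case (Suc i')
      have "vec_val \<nu> (b 0 *s f0 + ?w) \<le> vec_val \<nu> ?w"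
        by (rule vv_w[OF val f0k f0n wk])
      also have "\<dots> \<le> \<nu> (b (Suc i'))" using IH2[rule_format, of i' "\<lambda>j. b (Suc j)"] i Suc by simp
      finally show ?thesis using xe Suc by simp
    qed
  qed
  have P3: "\<forall>x\<in>VV J. \<exists>b. x = (\<Sum>j<Suc m. b j *s f j)"
  proof
    fix x :: "'k^'n" assume x: "x \<in> VV J"
    obtain b' where b': "p x = (\<Sum>j<m. b' j *s f' j)" using IH3 pV[OF x] by blast
    let ?b = "\<lambda>i. if i = 0 then x $ k else b' (i - 1)"
    have "(\<Sum>j<Suc m. ?b j *s f j) = x $ k *s f0 + p x" using split[of ?b] b' by simp
    also have "\<dots> = x" unfolding p_def by simp
    finally show "\<exists>b. x = (\<Sum>j<Suc m. b j *s f j)" by metis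
  qed
  have P4: "\<forall>i. Suc i < Suc m \<longrightarrow> \<gamma> i \<le> \<gamma> (Suc i)"
  proof (intro allI impI)
    fix i assume i: "Suc i < Suc m"
    show "\<gamma> i \<le> \<gamma> (Suc i)"
    proof (cases i)
      case 0
      have "\<gamma>0 \<le> \<gamma>' 0" using IH5 i 0 pval unfolding S'_def by auto
      then show ?thesis using 0 unfolding \<gamma>_def by simp
    next
      case (Suc i')
      then show ?thesis using IH4 i unfolding \<gamma>_def by auto
    qed
  qed
  have P5: "\<forall>i<Suc m. \<forall>c. (\<forall>s\<in>S. c \<le> vec_val \<nu> s) \<longrightarrow> c \<le> \<gamma> i"
  proof (intro allI impI)
    fix i c assume i: "i < Suc m" and c: "\<forall>s\<in>S. c \<le> vec_val \<nu> s"
    have c0: "c \<le> \<gamma>0" using gc c by blast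
    show "c \<le> \<gamma> i"
    proof (cases i)
      case 0 then show ?thesis using c0 unfolding \<gamma>_def by simp
    next
      case (Suc i')
      have "\<forall>s\<in>S'. c \<le> vec_val \<nu> s" using c0 pval unfolding S'_def by (auto intro: order_trans)
      then show ?thesis using IH5 i Suc unfolding \<gamma>_def by auto
    qed
  qed
  have Sm: "S' \<subseteq> msp \<nu> S"
  proof
    fix t assume "t \<in> S'"
    then obtain s where s: "s \<in> S" "t = p s" unfolding S'_def by blast
    have "\<gamma>0 \<le> \<nu> (s $ k)" using gle s vv_le[OF val] order_trans by blast
    then have "\<gamma>0 \<le> \<nu> (- (s $ k))" using v_neg[OF val] by simp
    then have "(- (s $ k)) *s f0 \<in> msp \<nu> S" by (rule fa[rule_format])
    moreover have "s \<in> msp \<nu> S" using msp_self[OF val] s by blast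
    ultimately have "(- (s $ k)) *s f0 + s \<in> msp \<nu> S" by (rule msp_add[OF val])
    moreover have "(- (s $ k)) *s f0 + s = t" using s unfolding p_def by (simp add: vec_eq_iff)
    ultimately show "t \<in> msp \<nu> S" by simp
  qed
  have P6: "msp \<nu> S = {(\<Sum>j<Suc m. a j *s f j) | a. \<forall>i<Suc m. \<gamma> i \<le> \<nu> (a i)}"
  proof
    show "msp \<nu> S \<subseteq> {(\<Sum>j<Suc m. a j *s f j) | a. \<forall>i<Suc m. \<gamma> i \<le> \<nu> (a i)}"
    proof
      fix x assume "x \<in> msp \<nu> S"
      then obtain n :: nat and c u where x: "x = (\<Sum>i<n. c i *s u i)" "\<forall>i<n. u i \<in> S \<and> Fin 0 \<le> \<nu> (c i)"
        by (rule mspE)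
      define a0 where "a0 = (\<Sum>i<n. c i * u i $ k)"
      have xe: "x = a0 *s f0 + (\<Sum>i<n. c i *s p (u i))"
        unfolding x(1) a0_def p_def
        by (simp add: vec_eq_iff sum_component algebra_simps sum_subtractf sum_distrib_right sum_distrib_left)
      have "(\<Sum>i<n. c i *s p (u i)) \<in> msp \<nu> S'"
        by (rule mspI[where n=n and c=c and y="\<lambda>i. p (u i)"]) (use x in \<open>auto simp: S'_def\<close>)
      then have "(\<Sum>i<n. c i *s p (u i)) \<in> {(\<Sum>j<m. a j *s f' j) | a. \<forall>i<m. \<gamma>' i \<le> \<nu> (a i)}"
        using IH6 by simp
      then obtain a' where a': "(\<Sum>i<n. c i *s p (u i)) = (\<Sum>j<m. a' j *s f' j)"
        "\<forall>i<m. \<gamma>' i \<le> \<nu> (a' i)"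
        by (rule memCE[where g="\<lambda>a. \<Sum>j<m. a j *s f' j" and P="\<lambda>a. \<forall>i<m. \<gamma>' i \<le> \<nu> (a i)"])
      have a0v: "\<gamma>0 \<le> \<nu> a0" unfolding a0_def
      proof (rule v_sum[OF val])
        show "finite {..<n}" by simp
      next
        fix i assume "i \<in> {..<n}"
        then have "u i \<in> S" "Fin 0 \<le> \<nu> (c i)" using x by auto
        then have "\<gamma>0 \<le> \<nu> (u i $ k)" using gle vv_le[OF val] order_trans by blast
        also have "\<dots> \<le> \<nu> (c i) + \<nu> (u i $ k)" using \<open>Fin 0 \<le> \<nu> (c i)\<close> ext_le_add2 by blast
        finally show "\<gamma>0 \<le> \<nu> (c i * u i $ k)" using v_mult[OF val] by simp
      qed
      let ?a = "\<lambda>i. if i = 0 then a0 else a' (i - 1)"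
      have "x = (\<Sum>j<Suc m. ?a j *s f j)" using xe a'(1) split[of ?a] by simp
      moreover have "\<forall>i<Suc m. \<gamma> i \<le> \<nu> (?a i)"
        using a0v a'(2) unfolding \<gamma>_def by (auto simp: less_Suc_eq_0_disj)
      ultimately show "x \<in> {(\<Sum>j<Suc m. a j *s f j) | a. \<forall>i<Suc m. \<gamma> i \<le> \<nu> (a i)}"
        by (rule memCI[where g="\<lambda>a. \<Sum>j<Suc m. a j *s f j" and P="\<lambda>a. \<forall>i<Suc m. \<gamma> i \<le> \<nu> (a i)"])
    qed
  next
    show "{(\<Sum>j<Suc m. a j *s f j) | a. \<forall>i<Suc m. \<gamma> i \<le> \<nu> (a i)} \<subseteq> msp \<nu> S"
    proof
      fix x assume "x \<in> {(\<Sum>j<Suc m. a j *s f j) | a. \<forall>i<Suc m. \<gamma> i \<le> \<nu> (a i)}"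
      then obtain a where a: "x = (\<Sum>j<Suc m. a j *s f j)" "\<forall>i<Suc m. \<gamma> i \<le> \<nu> (a i)"
        by (rule memCE[where g="\<lambda>a. \<Sum>j<Suc m. a j *s f j" and P="\<lambda>a. \<forall>i<Suc m. \<gamma> i \<le> \<nu> (a i)"])
      have x: "x = a 0 *s f0 + (\<Sum>j<m. a (Suc j) *s f' j)" using a(1) split by simp
      have "a 0 *s f0 \<in> msp \<nu> S" using fa a(2) unfolding \<gamma>_def by auto
      moreover have "(\<Sum>j<m. a (Suc j) *s f' j) \<in> msp \<nu> S'"
        unfolding IH6
        by (rule memCI[where g="\<lambda>a. \<Sum>j<m. a j *s f' j" and P="\<lambda>a. \<forall>i<m. \<gamma>' i \<le> \<nu> (a i)"])
          (use a(2) in \<open>auto simp: \<gamma>_def\<close>)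
      then have "(\<Sum>j<m. a (Suc j) *s f' j) \<in> msp \<nu> S" using msp_sub[OF val Sm] by blast
      ultimately show "x \<in> msp \<nu> S" unfolding x by (rule msp_add[OF val])
    qed
  qed
  show ?case
    by (intro exI[of _ f] exI[of _ \<gamma>] conjI; (rule P1 P2 P3 P4 P5 P6)?)
qed

end


lemma sum_pad:
  fixes i N :: nat
  assumes "i \<le> N"
  shows "(\<Sum>j<N. (if j < i then b j else 0) *s f j) = (\<Sum>j<i. b j *s (f j :: 'k::field ^ 'n::finite))"
proof -
  have "(\<Sum>j<N. (if j < i then b j else 0) *s f j) = (\<Sum>j<i. (if j < i then b j else 0) *s f j)"
    apply (rule sum.mono_neutral_right) using assms by auto
  also have "\<dots> = (\<Sum>j<i. b j *s f j)" by (rule sum.cong) auto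
  finally show ?thesis .
qed

lemma chain_mono:
  assumes "\<forall>i. Suc i < m \<longrightarrow> (\<gamma> i :: 'a::order) \<le> \<gamma> (Suc i)" "j \<le> l" "l < m"
  shows "\<gamma> j \<le> \<gamma> l"
  using assms(2,3)
proof (induction l)
  case 0 then show ?case by simp
next
  case (Suc l)
  show ?case
  proof (cases "j = Suc l")
    case True then show ?thesis by simp
  next
    case False
    then have "\<gamma> j \<le> \<gamma> l" using Suc by simp
    also have "\<gamma> l \<le> \<gamma> (Suc l)" using assms(1) Suc.prems by blast
    finally show ?thesis .
  qed
qed

lemma span_subspace:
  "vec.subspace {(\<Sum>j<i. b j *s f j) | b. True}"
  unfolding vec.subspace_def
proof (intro conjI ballI allI)
  show "0 \<in> {(\<Sum>j<i. b j *s f j) | b. True}"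
    by (rule memCI[where g="\<lambda>b. \<Sum>j<i. b j *s f j" and a="\<lambda>_. 0" and P="\<lambda>b. True"]) auto
next
  fix x y assume "x \<in> {(\<Sum>j<i. b j *s f j) | b. True}" "y \<in> {(\<Sum>j<i. b j *s f j) | b. True}"
  obtain b1 where b1: "x = (\<Sum>j<i. b1 j *s f j)"
    using \<open>x \<in> _\<close> by (rule memCE[where g="\<lambda>b. \<Sum>j<i. b j *s f j" and P="\<lambda>b. True"])
  obtain b2 where b2: "y = (\<Sum>j<i. b2 j *s f j)"
    using \<open>y \<in> _\<close> by (rule memCE[where g="\<lambda>b. \<Sum>j<i. b j *s f j" and P="\<lambda>b. True"])
  from b1 b2
  have "x + y = (\<Sum>j<i. (b1 j + b2 j) *s f j)"
    by (simp add: sum.distrib vec.scale_left_distrib)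
  then show "x + y \<in> {(\<Sum>j<i. b j *s f j) | b. True}"
    by (rule memCI[where g="\<lambda>b. \<Sum>j<i. b j *s f j" and P="\<lambda>b. True"]) auto
next
  fix c x assume "x \<in> {(\<Sum>j<i. b j *s f j) | b. True}"
  then obtain b1 where "x = (\<Sum>j<i. b1 j *s f j)"
    by (rule memCE[where g="\<lambda>b. \<Sum>j<i. b j *s f j" and P="\<lambda>b. True"])
  then have "c *s x = (\<Sum>j<i. (c * b1 j) *s f j)"
    by (simp add: vec.scale_sum_right)
  then show "c *s x \<in> {(\<Sum>j<i. b j *s f j) | b. True}"
    by (rule memCI[where g="\<lambda>b. \<Sum>j<i. b j *s f j" and P="\<lambda>b. True"]) auto
qed

theorem corollary3p14:
  fixes \<nu> :: "'k::field \<Rightarrow> 'g::linordered_ab_group_add ext"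
    and S C :: "('k ^ 'n::finite) set"
  assumes "valuation \<nu>"
    and "finite S"
    and "C = vconv \<nu> S"
    and "0 \<in> C"
  shows "\<exists>(F :: nat \<Rightarrow> ('k ^ 'n) set) (\<gamma> :: nat \<Rightarrow> 'g ext).
           (\<forall>i\<in>{1..CARD('n)}. vec.subspace (F i)) \<and>
           {0} \<subset> F 1 \<and>
           (\<forall>i. 1 \<le> i \<and> i < CARD('n) \<longrightarrow> F i \<subset> F (Suc i)) \<and>
           F CARD('n) = UNIV \<and>
           (\<forall>i. 1 \<le> i \<and> i < CARD('n) \<longrightarrow> \<gamma> i \<le> \<gamma> (Suc i)) \<and>
           C = {(\<Sum>i\<in>{1..CARD('n)}. v i) | v.
                  \<forall>i\<in>{1..CARD('n)}. v i \<in> F i \<and> \<gamma> i \<le> vec_val \<nu> (v i)}"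
proof -
  note val = assms(1)
  define N where "N = CARD('n)"
  have N1: "1 \<le> N" unfolding N_def by (simp add: Suc_leI)
  have CS: "C = msp \<nu> S" using vconv_msp[OF val] assms(3,4) by simp
  have "S \<subseteq> VV UNIV" unfolding VV_def by simp
  then obtain f :: "nat \<Rightarrow> 'k ^ 'n" and \<gamma> :: "nat \<Rightarrow> 'g ext" where
    H1: "\<forall>i<N. f i \<in> VV UNIV \<and> vec_val \<nu> (f i) = Fin 0" and
    H2: "\<forall>b. \<forall>i<N. vec_val \<nu> (\<Sum>j<N. b j *s f j) \<le> \<nu> (b i)" and
    H3: "\<forall>x\<in>VV UNIV. \<exists>b. x = (\<Sum>j<N. b j *s f j)" and
    H4: "\<forall>i. Suc i < N \<longrightarrow> \<gamma> i \<le> \<gamma> (Suc i)" and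
    H6: "msp \<nu> S = {(\<Sum>j<N. a j *s f j) | a. \<forall>i<N. \<gamma> i \<le> \<nu> (a i)}"
    using main_claim[OF val, of UNIV N S] assms(2) unfolding N_def by auto
  define F where "F = (\<lambda>i. {(\<Sum>j<i. b j *s f j) | b. True})"
  define G where "G = (\<lambda>i. \<gamma> (i - 1))"
  define T where "T = {(\<Sum>j<N. a j *s f j) | a. \<forall>i<N. \<gamma> i \<le> \<nu> (a i)}"
  have Fmem: "(\<Sum>j<i. b j *s f j) \<in> F i" for i b
    unfolding F_def by (rule memCI[where g="\<lambda>b. \<Sum>j<i. b j *s f j" and P="\<lambda>b. True"]) auto
  have FE: "x \<in> F i \<Longrightarrow> \<exists>b. x = (\<Sum>j<i. b j *s f j)" for x i
    unfolding F_def by (erule memCE[where g="\<lambda>b. \<Sum>j<i. b j *s f j" and P="\<lambda>b. True"]) blast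
  have fi_in: "f i \<in> F (Suc i)" for i
  proof -
    have "(\<Sum>j<Suc i. (if j = i then 1 else 0) *s f j) = f i" by simp
    then show ?thesis using Fmem[where i="Suc i" and b="\<lambda>j. if j = i then 1 else 0"] by simp
  qed
  have fi_notin: "f i \<notin> F i" if "i < N" for i
  proof
    assume "f i \<in> F i"
    then obtain b where b: "f i = (\<Sum>j<i. b j *s f j)" using FE by blast
    define c where "c = (\<lambda>j. if j = i then -1 else b j)"
    define b' where "b' = (\<lambda>j. if j < Suc i then c j else 0)"
    have "(\<Sum>j<N. b' j *s f j) = (\<Sum>j<Suc i. c j *s f j)"
      unfolding b'_def using that by (intro sum_pad) simp
    also have "\<dots> = (\<Sum>j<i. c j *s f j) + c i *s f i" by (rule sum.lessThan_Suc)
    also have "(\<Sum>j<i. c j *s f j) = (\<Sum>j<i. b j *s f j)"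
      by (rule sum.cong) (auto simp: c_def)
    also have "c i = -1" unfolding c_def by simp
    finally have e: "(\<Sum>j<N. b' j *s f j) = 0" using b by (simp add: vec_eq_iff)
    have "vec_val \<nu> (\<Sum>j<N. b' j *s f j) \<le> \<nu> (b' i)" using H2[rule_format, of i b'] that .
    then have "vec_val \<nu> (0::'k^'n) \<le> \<nu> (-1)" unfolding e unfolding b'_def c_def by simp
    moreover have "vec_val \<nu> (0::'k^'n) = Infty" using vv_Infty[OF val, of 0] by simp
    ultimately have "(Infty::'g ext) \<le> Fin 0" using v_neg1[OF val] by simp
    then show False by simp
  qed
  have Fmono: "F i \<subseteq> F (Suc i)" for i
  proof
    fix x assume "x \<in> F i"
    then obtain b where b: "x = (\<Sum>j<i. b j *s f j)" using FE by blast
    have "x = (\<Sum>j<Suc i. (if j < i then b j else 0) *s f j)"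
      using sum_pad[of i "Suc i" b f] b by simp
    then show "x \<in> F (Suc i)" by (simp only:) (rule Fmem)
  qed
  have P1: "\<forall>i\<in>{1..N}. vec.subspace (F i)" unfolding F_def by (intro ballI) (rule span_subspace)
  have P2: "{0} \<subset> F 1"
  proof -
    have "0 \<in> F 1" using Fmem[where i=1 and b="\<lambda>_. 0"] by simp
    moreover have "f 0 \<in> F 1" using fi_in[of 0] by simp
    moreover have "f 0 \<noteq> 0" using H1 N1 vv_Infty[OF val, of "f 0"] by auto
    ultimately show ?thesis by blast
  qed
  have P3: "\<forall>i. 1 \<le> i \<and> i < N \<longrightarrow> F i \<subset> F (Suc i)"
    using Fmono fi_in fi_notin by blast
  have P4: "F N = UNIV"
  proof -
    have "x \<in> F N" for x
    proof -
      obtain b where "x = (\<Sum>j<N. b j *s f j)" using H3 unfolding VV_def by auto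
      then show ?thesis using Fmem by simp
    qed
    then show ?thesis by blast
  qed
  have P5: "\<forall>i. 1 \<le> i \<and> i < N \<longrightarrow> G i \<le> G (Suc i)"
  proof (intro allI impI)
    fix i assume i: "1 \<le> i \<and> i < N"
    then have "Suc (i - 1) < N" by simp
    then have "\<gamma> (i - 1) \<le> \<gamma> (Suc (i - 1))" using H4 by blast
    then show "G i \<le> G (Suc i)" unfolding G_def using i by simp
  qed
  have Tadd: "x + y \<in> T" if hx: "x \<in> T" and hy: "y \<in> T" for x y
  proof -
    obtain a1 where a1: "x = (\<Sum>j<N. a1 j *s f j)" "\<forall>i<N. \<gamma> i \<le> \<nu> (a1 i)"
      using hx unfolding T_def
      by (rule memCE[where g="\<lambda>a. \<Sum>j<N. a j *s f j" and P="\<lambda>a. \<forall>i<N. \<gamma> i \<le> \<nu> (a i)"])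
    obtain a2 where a2: "y = (\<Sum>j<N. a2 j *s f j)" "\<forall>i<N. \<gamma> i \<le> \<nu> (a2 i)"
      using hy unfolding T_def
      by (rule memCE[where g="\<lambda>a. \<Sum>j<N. a j *s f j" and P="\<lambda>a. \<forall>i<N. \<gamma> i \<le> \<nu> (a i)"])
    have "x + y = (\<Sum>j<N. (a1 j + a2 j) *s f j)"
      using a1 a2 by (simp add: sum.distrib vec.scale_left_distrib)
    moreover have "\<forall>i<N. \<gamma> i \<le> \<nu> (a1 i + a2 i)"
    proof (intro allI impI)
      fix i assume "i < N"
      then have "\<gamma> i \<le> min (\<nu> (a1 i)) (\<nu> (a2 i))" using a1 a2 by simp
      also have "\<dots> \<le> \<nu> (a1 i + a2 i)" by (rule v_add[OF val])
      finally show "\<gamma> i \<le> \<nu> (a1 i + a2 i)" .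
    qed
    ultimately show ?thesis unfolding T_def
      by (rule memCI[where g="\<lambda>a. \<Sum>j<N. a j *s f j" and P="\<lambda>a. \<forall>i<N. \<gamma> i \<le> \<nu> (a i)"])
  qed
  have T0: "0 \<in> T" unfolding T_def
    by (rule memCI[where g="\<lambda>a. \<Sum>j<N. a j *s f j" and P="\<lambda>a. \<forall>i<N. \<gamma> i \<le> \<nu> (a i)" and a="\<lambda>_. 0"])
      (auto simp: v0[OF val])
  have Tsum: "finite A \<Longrightarrow> (\<And>i. i \<in> A \<Longrightarrow> g i \<in> T) \<Longrightarrow> (\<Sum>i\<in>A. g i) \<in> T" for A g
    by (induction A rule: finite_induct) (auto intro: T0 Tadd)
  have P6: "C = {(\<Sum>i\<in>{1..N}. v i) | v. \<forall>i\<in>{1..N}. v i \<in> F i \<and> G i \<le> vec_val \<nu> (v i)}"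
  proof
    show "C \<subseteq> {(\<Sum>i\<in>{1..N}. v i) | v. \<forall>i\<in>{1..N}. v i \<in> F i \<and> G i \<le> vec_val \<nu> (v i)}"
    proof
      fix x assume "x \<in> C"
      then have "x \<in> T" using CS H6 T_def by simp
      then obtain a where a: "x = (\<Sum>j<N. a j *s f j)" "\<forall>i<N. \<gamma> i \<le> \<nu> (a i)"
        unfolding T_def
        by (rule memCE[where g="\<lambda>a. \<Sum>j<N. a j *s f j" and P="\<lambda>a. \<forall>i<N. \<gamma> i \<le> \<nu> (a i)"])
      define v where "v = (\<lambda>i. a (i - 1) *s f (i - 1))"
      have "(\<Sum>i\<in>{1..N}. v i) = (\<Sum>k<N. v (Suc k))"
        using sum.atLeast1_atMost_eq[of v N] by simp
      also have "\<dots> = x" unfolding v_def a(1) by simp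
      finally have xe: "x = (\<Sum>i\<in>{1..N}. v i)" by simp
      have "\<forall>i\<in>{1..N}. v i \<in> F i \<and> G i \<le> vec_val \<nu> (v i)"
      proof
        fix i assume i: "i \<in> {1..N}"
        then obtain i' where i': "i = Suc i'" "i' < N" by (cases i) auto
        have "v i = (\<Sum>j<Suc i'. (if j = i' then a i' else 0) *s f j)" using i' unfolding v_def by simp
        then have "v i \<in> F i" using Fmem[where i="Suc i'" and b="\<lambda>j. if j = i' then a i' else 0"] i' by simp
        moreover have "G i \<le> vec_val \<nu> (v i)"
        proof -
          have "Fin 0 \<le> vec_val \<nu> (f i')" using H1 i' by simp
          then have "\<nu> (a i') \<le> vec_val \<nu> (v i)" using vv_scale[OF val] i' unfolding v_def by simp
          moreover have "\<gamma> i' \<le> \<nu> (a i')" using a(2) i' by blast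
          ultimately show ?thesis using i' unfolding G_def by simp
        qed
        ultimately show "v i \<in> F i \<and> G i \<le> vec_val \<nu> (v i)" by simp
      qed
      with xe show "x \<in> {(\<Sum>i\<in>{1..N}. v i) | v. \<forall>i\<in>{1..N}. v i \<in> F i \<and> G i \<le> vec_val \<nu> (v i)}"
        by (rule memCI[where g="\<lambda>v. \<Sum>i\<in>{1..N}. v i" and P="\<lambda>v. \<forall>i\<in>{1..N}. v i \<in> F i \<and> G i \<le> vec_val \<nu> (v i)"])
    qed
  next
    show "{(\<Sum>i\<in>{1..N}. v i) | v. \<forall>i\<in>{1..N}. v i \<in> F i \<and> G i \<le> vec_val \<nu> (v i)} \<subseteq> C"
    proof
      fix x assume "x \<in> {(\<Sum>i\<in>{1..N}. v i) | v. \<forall>i\<in>{1..N}. v i \<in> F i \<and> G i \<le> vec_val \<nu> (v i)}"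
      then obtain v where v: "x = (\<Sum>i\<in>{1..N}. v i)" "\<forall>i\<in>{1..N}. v i \<in> F i \<and> G i \<le> vec_val \<nu> (v i)"
        by (rule memCE[where g="\<lambda>v. \<Sum>i\<in>{1..N}. v i" and P="\<lambda>v. \<forall>i\<in>{1..N}. v i \<in> F i \<and> G i \<le> vec_val \<nu> (v i)"])
      have "v i \<in> T" if i: "i \<in> {1..N}" for i
      proof -
        obtain b where b: "v i = (\<Sum>j<i. b j *s f j)" using FE v(2) i by blast
        define a where "a = (\<lambda>j. if j < i then b j else 0)"
        have va: "v i = (\<Sum>j<N. a j *s f j)" unfolding a_def b using sum_pad[of i N b f] i by simp
        have "\<forall>j<N. \<gamma> j \<le> \<nu> (a j)"
        proof (intro allI impI)
          fix j assume j: "j < N"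
          show "\<gamma> j \<le> \<nu> (a j)"
          proof (cases "j < i")
            case True
            have "\<gamma> j \<le> \<gamma> (i - 1)" by (rule chain_mono[OF H4]) (use True i in auto)
            also have "\<dots> \<le> vec_val \<nu> (v i)" using v(2) i unfolding G_def by blast
            also have "\<dots> \<le> \<nu> (a j)" unfolding va by (rule H2[rule_format, OF j])
            finally show ?thesis .
          next
            case False then show ?thesis unfolding a_def by (simp add: v0[OF val])
          qed
        qed
        with va show ?thesis unfolding T_def
          by (rule memCI[where g="\<lambda>a. \<Sum>j<N. a j *s f j" and P="\<lambda>a. \<forall>i<N. \<gamma> i \<le> \<nu> (a i)"])
      qed
      then have "x \<in> T" unfolding v(1) by (intro Tsum) auto
      then show "x \<in> C" using CS H6 T_def by simp
    qed
  qed
  show ?thesis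
    unfolding N_def[symmetric]
    by (intro exI[of _ F] exI[of _ G] conjI; (rule P1 P2 P3 P4 P5 P6)?)
qed

end
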